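(* Let $0<\epsilon\le \mathrm{e}^{-2}$, set $a=2\sqrt{\log(1/\epsilon)}$, and define \[ \phi(p)=\frac{\operatorname{erf}(ap)+1}{2},\qquad \psi(p)=\phi(p)\,\mathrm{e}^{-p},\qquad p\in\mathbb{R}. \] Then: (i) $0<\psi(p)\le \mathrm{e}^{-|p|}$ for all $p\in\mathbb{R}$ (exponential decay on $\mathbb{R}$); (ii) $|\psi(p)-\mathrm{e}^{-p}|\le\epsilon$ for all $p\ge 1/2$; (iii) there is a constant $C>0$, independent of $\epsilon$ and $r$, such that for every integer $r$ with $\tfrac12\log(1/\epsilon)\le r\le\log(1/\epsilon)$, \[ \|\psi^{(r)}\|_{L^2(\mathbb{R})}^{1/r}\le C\, r . \]
   Context: $\operatorname{erf}(p)=\frac{2}{\sqrt{\pi}}\int_0^p \mathrm{e}^{-t^2}\,\mathrm{d}t$ is the error function; $\log$ is the natural logarithm; $\psi^{(r)}$ is the $r$-th derivative of $\psi$. *)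

theory Defs
  imports "HOL-Analysis.Analysis"
begin

definition erf :: "real \<Rightarrow> real" where
  "erf p = 2 / sqrt pi * (LBINT t=0..p. exp (- (t\<^sup>2)))"

definition a_par :: "real \<Rightarrow> real" where
  "a_par \<epsilon> = 2 * sqrt (ln (1 / \<epsilon>))"

definition phi :: "real \<Rightarrow> real \<Rightarrow> real" where
  "phi \<epsilon> p = (erf (a_par \<epsilon> * p) + 1) / 2"

definition psi :: "real \<Rightarrow> real \<Rightarrow> real" where
  "psi \<epsilon> p = phi \<epsilon> p * exp (- p)"

definition L2_norm_R :: "(real \<Rightarrow> real) \<Rightarrow> real" where
  "L2_norm_R f = sqrt (LINT x|lborel. (f x)\<^sup>2)"

end

theory Submission
  imports Defs "HOL-Complex_Analysis.Complex_Analysis" "HOL-Probability.Probability" "HOL-Real_Asymp.Real_Asymp"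
begin


definition GG :: "nat \<Rightarrow> complex \<Rightarrow> complex" where
  "GG m = (deriv ^^ m) (\<lambda>z. exp (- (z^2)))"

definition hh :: "nat \<Rightarrow> real \<Rightarrow> real" where
  "hh m x = Re (GG m (of_real x))"

lemma GG_holo: "GG m holomorphic_on UNIV"
  unfolding GG_def by (intro holomorphic_higher_deriv) (auto intro!: holomorphic_intros)

lemma GG_deriv: "(GG m has_field_derivative GG (Suc m) z) (at z)"
proof -
  have "GG (Suc m) = deriv (GG m)" by (simp add: GG_def)
  then show ?thesis using holomorphic_derivI[OF GG_holo[of m] open_UNIV, of z UNIV] by simp
qed

lemma hh_0: "hh 0 x = exp (- (x^2))"
  unfolding hh_def GG_def by (simp flip: of_real_power of_real_minus exp_of_real) (metis exp_of_real Re_complex_of_real)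

lemma hh_deriv: "(hh m has_real_derivative hh (Suc m) x) (at x)"
  unfolding hh_def
  by (rule has_field_derivative_Re, rule has_vector_derivative_real_field, rule GG_deriv)

lemma hh_bound:
  assumes "\<rho> > 0"
  shows "\<bar>hh m x\<bar> \<le> fact m * exp (2 * \<rho>^2 - x^2 / 2) / \<rho>^m"
proof -
  have "\<bar>hh m x\<bar> \<le> cmod (GG m (of_real x))" unfolding hh_def by (rule abs_Re_le_cmod)
  also have "\<dots> \<le> fact m * exp (2 * \<rho>^2 - x^2 / 2) / \<rho>^m"
    unfolding GG_def
  proof (rule Cauchy_inequality)
    show "(\<lambda>z. exp (- (z^2))) holomorphic_on ball (complex_of_real x) \<rho>"
      by (auto intro!: holomorphic_intros)
    show "continuous_on (cball (complex_of_real x) \<rho>) (\<lambda>z. exp (- (z^2)))"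
      by (auto intro!: continuous_intros)
    show "0 < \<rho>" by fact
    fix w assume w: "cmod (complex_of_real x - w) = \<rho>"
    have u: "\<bar>x - Re w\<bar> \<le> \<rho>" using abs_Re_le_cmod[of "complex_of_real x - w"] w by simp
    have v: "\<bar>Im w\<bar> \<le> \<rho>" using abs_Im_le_cmod[of "complex_of_real x - w"] w by simp
    have v2: "(Im w)^2 \<le> \<rho>^2" using power_mono[OF v abs_ge_zero, of 2] by simp
    have u2: "(x - Re w)^2 \<le> \<rho>^2" using power_mono[OF u abs_ge_zero, of 2] by simp
    have "x^2 \<le> 2 * (Re w)^2 + 2 * (x - Re w)^2"
      using zero_le_square[of "x - 2 * Re w"] by (simp add: power2_eq_square algebra_simps)
    then have "- ((Re w)^2 - (Im w)^2) \<le> 2 * \<rho>^2 - x^2/2" using u2 v2 by linarith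
    moreover have "Re (- (w^2)) = - ((Re w)^2 - (Im w)^2)"
      by (simp add: power2_eq_square)
    ultimately show "cmod (exp (- (w^2))) \<le> exp (2 * \<rho>^2 - x^2 / 2)"
      by (simp add: norm_exp_eq_Re)
  qed
  finally show ?thesis .
qed



lemma I_deriv:
  "((\<lambda>p. LBINT t=0..p. exp (- (t^2))) has_real_derivative exp (- (x^2))) (at x)"
proof -
  define a where "a = min x 0 - 1"
  define b where "b = max x 0 + 1"
  have cont: "continuous_on {a..b} (\<lambda>t::real. exp (- (t^2)))" by (intro continuous_intros)
  have "((\<lambda>p. LBINT t=0..p. exp (- (t^2))) has_vector_derivative exp (- (x^2))) (at x within {a..b})"
    using interval_integral_FTC2[OF _ _ cont, of 0 x] unfolding zero_ereal_def by (simp add: a_def b_def)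
  then have "((\<lambda>p. LBINT t=0..p. exp (- (t^2))) has_vector_derivative exp (- (x^2))) (at x within {a<..<b})"
    by (rule has_vector_derivative_within_subset) auto
  then have "((\<lambda>p. LBINT t=0..p. exp (- (t^2))) has_vector_derivative exp (- (x^2))) (at x)"
    by (subst (asm) has_vector_derivative_within_open) (auto simp: a_def b_def)
  then show ?thesis by (simp add: has_real_derivative_iff_has_vector_derivative)
qed

lemma erf_deriv: "(erf has_real_derivative (2 / sqrt pi * exp (- (x^2)))) (at x)"
proof -
  have "erf = (\<lambda>p. 2 / sqrt pi * (LBINT t=0..p. exp (- (t^2))))" by (auto simp: erf_def fun_eq_iff)
  moreover have "((\<lambda>p. 2 / sqrt pi * (LBINT t=0..p. exp (- (t^2)))) has_real_derivative 2 / sqrt pi * exp (- (x^2))) (at x)"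
    by (rule DERIV_cmult[OF I_deriv])
  ultimately show ?thesis by simp
qed

lemma erf_0: "erf 0 = 0" by (simp add: erf_def zero_ereal_def)

lemma erf_odd: "erf (- x) = - erf x"
proof -
  have "\<forall>y. ((\<lambda>y. erf y + erf (- y)) has_real_derivative 0) (at y)"
  proof
    fix y
    show "((\<lambda>y. erf y + erf (- y)) has_real_derivative 0) (at y)"
      using DERIV_add[OF erf_deriv[of y] DERIV_chain2[OF erf_deriv[of "-y"] DERIV_minus[OF DERIV_ident]]]
      by simp
  qed
  from DERIV_isconst_all[OF this, of x 0] show ?thesis by (simp add: erf_0)
qed

lemma erf_strict_mono: "x < y \<Longrightarrow> erf x < erf y"
  by (rule DERIV_pos_imp_increasing) (auto intro!: exI erf_deriv)

lemma erf_lim: "(erf \<longlongrightarrow> 1) at_top"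
proof -
  have int: "set_integrable lborel {0..} (\<lambda>t::real. exp (- (t^2)))"
    using gaussian_moment_0 unfolding set_integrable_def by (auto simp: has_bochner_integral_iff)
  have val: "(LINT t:{0..}|lborel. exp (- (t^2))) = sqrt pi / 2"
    using gaussian_moment_0 unfolding set_lebesgue_integral_def by (auto simp: has_bochner_integral_iff)
  have "((\<lambda>b. LINT t:{0..b}|lborel. exp (- (t^2))) \<longlongrightarrow> sqrt pi / 2) at_top"
    using tendsto_set_lebesgue_integral_at_top[OF _ int] val by simp
  then have "((\<lambda>b. 2 / sqrt pi * (LINT t:{0..b}|lborel. exp (- (t^2)))) \<longlongrightarrow> 2 / sqrt pi * (sqrt pi / 2)) at_top"
    by (intro tendsto_intros)
  then have lim: "((\<lambda>b. 2 / sqrt pi * (LINT t:{0..b}|lborel. exp (- (t^2)))) \<longlongrightarrow> 1) at_top"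
    by simp
  show ?thesis
  proof (rule Lim_transform_eventually[OF lim])
    show "\<forall>\<^sub>F b in at_top. 2 / sqrt pi * (LINT t:{0..b}|lborel. exp (- (t^2))) = erf b"
      using eventually_ge_at_top[of "0::real"]
      by eventually_elim (simp add: erf_def, metis interval_integral_Icc zero_ereal_def)
  qed
qed

lemma erf_le1: "erf x \<le> 1"
proof (rule tendsto_lowerbound[OF erf_lim])
  show "\<forall>\<^sub>F y in at_top. erf x \<le> erf y"
    using eventually_ge_at_top[of x]
    by eventually_elim (metis erf_strict_mono order_le_less order_refl)
qed simp

lemma erf_lt1: "erf x < 1"
  using erf_strict_mono[of x "x+1"] erf_le1[of "x+1"] by simp

lemma erf_gt: "- 1 < erf x"
  using erf_lt1[of "-x"] erf_odd[of x] by simp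

lemma erf_nonneg: "0 \<le> x \<Longrightarrow> 0 \<le> erf x"
  using erf_strict_mono[of 0 x] erf_0 by (cases "x = 0") auto

lemma mills:
  assumes "x > 0"
  shows "1 - erf x \<le> exp (- (x^2)) / (x * sqrt pi)"
proof -
  define U where "U y = exp (- (y^2)) / (y * sqrt pi) - (1 - erf y)" for y
  have dec: "U y \<le> U x" if "x \<le> y" for y
  proof (cases "x = y")
    case False
    then have "x < y" using that by simp
    have "U x > U y"
    proof (rule DERIV_neg_imp_decreasing[OF \<open>x < y\<close>])
      fix t assume t: "x \<le> t" "t \<le> y"
      then have tp: "t > 0" using assms by simp
      have A: "((\<lambda>y. exp (- (y^2))) has_real_derivative exp (- (t^2)) * (- (2 * t))) (at t)"
        by (auto intro!: derivative_eq_intros)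
      have B: "((\<lambda>y. y * sqrt pi) has_real_derivative sqrt pi) (at t)"
        by (auto intro!: derivative_eq_intros)
      have C: "((\<lambda>y. 1 - erf y) has_real_derivative - (2 / sqrt pi * exp (- (t^2)))) (at t)"
        by (auto intro!: derivative_eq_intros erf_deriv)
      have nz: "t * sqrt pi \<noteq> 0" using tp by simp
      have D: "(U has_real_derivative
         (exp (- (t^2)) * (- (2 * t)) * (t * sqrt pi) - exp (- (t^2)) * sqrt pi) / (t * sqrt pi * (t * sqrt pi))
          - - (2 / sqrt pi * exp (- (t^2)))) (at t)"
        unfolding U_def[abs_def] by (rule DERIV_diff[OF DERIV_divide[OF A B nz] C])
      have sp: "sqrt pi * sqrt pi = pi" by simp
      have "(exp (- (t^2)) * (- (2 * t)) * (t * sqrt pi) - exp (- (t^2)) * sqrt pi) / (t * sqrt pi * (t * sqrt pi))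
          - - (2 / sqrt pi * exp (- (t^2))) = - exp (- (t^2)) / (t^2 * sqrt pi)"
      proof -
        have gen: "\<And>s e. s > 0 \<Longrightarrow> (e * (- (2 * t)) * (t * s) - e * s) / (t * s * (t * s)) - - (2 / s * e) = - e / (t^2 * s)"
          using tp by (simp add: field_simps power2_eq_square)
        show ?thesis by (rule gen) simp
      qed
      with D have "(U has_real_derivative (- exp (- (t^2)) / (t^2 * sqrt pi))) (at t)" by simp
      moreover have "- exp (- (t^2)) / (t^2 * sqrt pi) < 0" using tp by (simp add: field_simps)
      ultimately show "\<exists>d. (U has_real_derivative d) (at t) \<and> d < 0" by blast
    qed
    then show ?thesis by simp
  qed simp
  have lim: "(U \<longlongrightarrow> 0) at_top"
  proof -
    have "((\<lambda>y. exp (- (y^2)) / (y * sqrt pi)) \<longlongrightarrow> 0) at_top" by real_asymp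
    moreover have "((\<lambda>y. 1 - erf y) \<longlongrightarrow> 1 - 1) at_top" by (intro tendsto_intros erf_lim)
    ultimately show ?thesis unfolding U_def using tendsto_diff by fastforce
  qed
  have ev: "\<forall>\<^sub>F y in at_top. U y \<le> U x"
    using eventually_ge_at_top[of x] by eventually_elim (rule dec)
  have "0 \<le> U x"
    by (rule tendsto_upperbound[OF lim ev]) simp
  then show ?thesis unfolding U_def by simp
qed



lemma leibniz_sum:
  fixes U V :: "nat \<Rightarrow> real"
  shows "(\<Sum>k\<le>n. real (n choose k) * (U (Suc k) * V (n - k) + U k * V (Suc (n - k))))
       = (\<Sum>k\<le>Suc n. real (Suc n choose k) * U k * V (Suc n - k))"
proof -
  define T where "T k = real (n choose k) * U k * V (Suc n - k)" for k
  have T1: "(\<Sum>k\<le>Suc n. T k) = T 0 + (\<Sum>k\<le>n. T (Suc k))"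
    by (rule sum.atMost_Suc_shift)
  have T2: "(\<Sum>k\<le>Suc n. T k) = (\<Sum>k\<le>n. T k)"
    by (simp add: T_def)
  have T3: "(\<Sum>k\<le>n. T k) = (\<Sum>k\<le>n. real (n choose k) * U k * V (Suc (n - k)))"
    by (rule sum.cong) (auto simp: T_def Suc_diff_le)
  have "(\<Sum>k\<le>Suc n. real (Suc n choose k) * U k * V (Suc n - k))
      = U 0 * V (Suc n) + (\<Sum>k\<le>n. real (Suc n choose Suc k) * U (Suc k) * V (n - k))"
    by (subst sum.atMost_Suc_shift) simp
  also have "(\<Sum>k\<le>n. real (Suc n choose Suc k) * U (Suc k) * V (n - k))
      = (\<Sum>k\<le>n. real (n choose k) * U (Suc k) * V (n - k)) + (\<Sum>k\<le>n. T (Suc k))"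
    by (simp add: T_def sum.distrib[symmetric] algebra_simps)
  finally have R: "(\<Sum>k\<le>Suc n. real (Suc n choose k) * U k * V (Suc n - k))
      = (\<Sum>k\<le>n. real (n choose k) * U (Suc k) * V (n - k)) + (\<Sum>k\<le>n. real (n choose k) * U k * V (Suc (n - k)))"
    using T1 T2 T3 by (simp add: T_def)
  show ?thesis unfolding R by (simp add: sum.distrib algebra_simps)
qed

definition LL :: "(nat \<Rightarrow> real \<Rightarrow> real) \<Rightarrow> (nat \<Rightarrow> real \<Rightarrow> real) \<Rightarrow> nat \<Rightarrow> real \<Rightarrow> real" where
  "LL U V n x = (\<Sum>k\<le>n. real (n choose k) * U k x * V (n - k) x)"

lemma LL_deriv:
  assumes U: "\<And>k x. (U k has_real_derivative U (Suc k) x) (at x)"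
      and V: "\<And>k x. (V k has_real_derivative V (Suc k) x) (at x)"
  shows "(LL U V n has_real_derivative LL U V (Suc n) x) (at x)"
proof -
  have "(LL U V n has_real_derivative
         (\<Sum>k\<le>n. real (n choose k) * (U (Suc k) x * V (n - k) x + U k x * V (Suc (n - k)) x))) (at x)"
    unfolding LL_def[abs_def]
    by (rule derivative_eq_intros refl U V | simp add: algebra_simps)+
  then show ?thesis
    using leibniz_sum[of n "\<lambda>k. U k x" "\<lambda>k. V k x"] by (simp add: LL_def)
qed

lemma LL_higher:
  assumes U: "\<And>k x. (U k has_real_derivative U (Suc k) x) (at x)"
      and V: "\<And>k x. (V k has_real_derivative V (Suc k) x) (at x)"
  shows "(deriv ^^ n) (LL U V 0) = LL U V n"
proof (induction n)
  case (Suc n)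
  have "(deriv ^^ Suc n) (LL U V 0) = deriv (LL U V n)" using Suc.IH by simp
  also have "\<dots> = LL U V (Suc n)"
    by (rule ext, rule DERIV_imp_deriv, rule LL_deriv[where U=U and V=V, OF U V])
  finally show ?case .
qed simp



lemma L_ge2: fixes e :: real assumes "0 < e" "e \<le> exp (-2)" shows "2 \<le> ln (1/e)"
proof -
  have "ln e \<le> ln (exp (-2))" using assms by (subst ln_le_cancel_iff) auto
  then show ?thesis using assms by (simp add: ln_div)
qed

lemma a_facts:
  assumes "0 < e" "e \<le> exp (-2)"
  shows "a_par e ^ 2 = 4 * ln (1/e)" "a_par e / 2 = sqrt (ln (1/e))" "2 \<le> a_par e" "0 < a_par e"
proof -
  have L: "2 \<le> ln (1/e)" by (rule L_ge2[OF assms])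
  show "a_par e ^ 2 = 4 * ln (1/e)" using L by (simp add: a_par_def power_mult_distrib)
  show "a_par e / 2 = sqrt (ln (1/e))" by (simp add: a_par_def)
  have "1 \<le> sqrt (ln (1/e))" using L by simp
  then show "2 \<le> a_par e" by (simp add: a_par_def)
  then show "0 < a_par e" by simp
qed

lemma psi_pos: "0 < psi e p"
  using erf_gt[of "a_par e * p"] by (simp add: psi_def phi_def)

lemma sqrt_pi_ge1: "1 \<le> sqrt pi"
  using pi_gt3 by simp

lemma tail_bound:
  assumes "1/2 \<le> x"
  shows "(1 - erf x) / 2 \<le> exp (- (x^2))"
proof -
  have xp: "0 < x" using assms by simp
  have "1 - erf x \<le> exp (- (x^2)) / (x * sqrt pi)" by (rule mills[OF xp])
  also have "\<dots> \<le> exp (- (x^2)) / (1/2)"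
  proof (rule divide_left_mono)
    show "1/2 \<le> x * sqrt pi" using assms sqrt_pi_ge1 mult_mono[of "1/2" x 1 "sqrt pi"] by simp
  qed (use xp in auto)
  finally show ?thesis by simp
qed

lemma psi_le:
  assumes "0 < e" "e \<le> exp (-2)"
  shows "psi e p \<le> exp (- \<bar>p\<bar>)"
proof (cases "0 \<le> p")
  case True
  have "phi e p \<le> 1" using erf_lt1[of "a_par e * p"] by (simp add: phi_def)
  then show ?thesis using True by (simp add: psi_def mult_left_le_one_le)
next
  case False
  define q where "q = - p"
  have qp: "0 < q" using False q_def by simp
  define a where "a = a_par e"
  have a2: "2 \<le> a" "a^2 = 4 * ln (1/e)" using a_facts[OF assms] by (auto simp: a_def)
  have L: "2 \<le> ln (1/e)" by (rule L_ge2[OF assms])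
  have ph: "phi e p = (1 - erf (a * q)) / 2"
    using erf_odd[of "a*q"] by (simp add: phi_def q_def a_def)
  have key: "(1 - erf (a * q)) / 2 \<le> exp (- (2 * q))"
  proof (cases "q \<le> 1/4")
    case True
    have "0 \<le> erf (a*q)" using erf_nonneg[of "a*q"] qp a2 by simp
    then have "(1 - erf (a * q)) / 2 \<le> 1/2" by simp
    also have "1/2 \<le> 1 + (- (2*q))" using True by simp
    also have "\<dots> \<le> exp (- (2 * q))" by (rule exp_ge_add_one_self)
    finally show ?thesis .
  next
    case False
    have "1/2 \<le> a * q" using False a2 mult_mono[of 2 a "1/4" q] by simp
    then have "(1 - erf (a * q)) / 2 \<le> exp (- ((a*q)^2))" by (rule tail_bound)
    also have "\<dots> \<le> exp (- (2 * q))"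
    proof -
      have "(a*q)^2 = a^2 * q^2" by (simp add: power_mult_distrib)
      also have "\<dots> \<ge> 8 * q^2" using a2 L by (intro mult_right_mono) auto
      finally have "8 * q^2 \<le> (a*q)^2" .
      moreover have "2 * q \<le> 8 * q^2" using False qp by (simp add: power2_eq_square)
      ultimately show ?thesis by simp
    qed
    finally show ?thesis .
  qed
  have "psi e p = phi e p * exp q" by (simp add: psi_def q_def)
  also have "\<dots> \<le> exp (- (2 * q)) * exp q" using key ph by (intro mult_right_mono) auto
  also have "\<dots> = exp (- \<bar>p\<bar>)" using qp by (simp add: q_def flip: exp_add)
  finally show ?thesis .
qed

lemma psi_close:
  assumes "0 < e" "e \<le> exp (-2)" "1/2 \<le> p"
  shows "\<bar>psi e p - exp (- p)\<bar> \<le> e"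
proof -
  define a where "a = a_par e"
  have a2: "2 \<le> a" "a^2 = 4 * ln (1/e)" using a_facts[OF assms(1,2)] by (auto simp: a_def)
  have L: "2 \<le> ln (1/e)" by (rule L_ge2[OF assms(1,2)])
  have ap: "1 \<le> a * p" using a2 assms(3) mult_mono[of 2 a "1/2" p] by simp
  have lt: "erf (a*p) < 1" by (rule erf_lt1)
  have "\<bar>psi e p - exp (- p)\<bar> = exp (- p) * ((1 - erf (a * p)) / 2)"
    using lt by (simp add: psi_def phi_def a_def field_simps)
  also have "\<dots> \<le> 1 * ((1 - erf (a * p)) / 2)"
    using lt assms(3) by (intro mult_right_mono) auto
  also have "\<dots> \<le> exp (- ((a*p)^2))" using tail_bound[of "a*p"] ap by simp
  also have "\<dots> \<le> exp (- ln (1/e))"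
  proof -
    have "a^2 * (1/2)^2 \<le> a^2 * p^2" using assms(3) by (intro mult_left_mono power_mono) auto
    moreover have "a^2 * (1/2)^2 = ln (1/e)" using a2 by (simp add: power2_eq_square)
    moreover have "(a*p)^2 = a^2 * p^2" by (simp add: power_mult_distrib)
    ultimately show ?thesis by simp
  qed
  also have "\<dots> = e" using assms by (simp add: ln_div)
  finally show ?thesis .
qed



definition Phi :: "real \<Rightarrow> nat \<Rightarrow> real \<Rightarrow> real" where
  "Phi a k p = (if k = 0 then (erf (a*p) + 1) / 2 else a / sqrt pi * a^(k-1) * hh (k-1) (a*p))"

definition Vf :: "nat \<Rightarrow> real \<Rightarrow> real" where
  "Vf j p = (-1)^j * exp (- p)"

lemma erf_chain[derivative_intros]:
  "(f has_real_derivative f') (at x) \<Longrightarrow> ((\<lambda>x. erf (f x)) has_real_derivative 2 / sqrt pi * exp (- ((f x)^2)) * f') (at x)"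
  by (rule DERIV_chain2[OF erf_deriv])

lemma hh_chain[derivative_intros]:
  "(f has_real_derivative f') (at x) \<Longrightarrow> ((\<lambda>x. hh m (f x)) has_real_derivative hh (Suc m) (f x) * f') (at x)"
  by (rule DERIV_chain2[OF hh_deriv])

lemma Phi_deriv: "(Phi a k has_real_derivative Phi a (Suc k) p) (at p)"
proof (cases k)
  case 0
  have "Phi a 0 = (\<lambda>p. (erf (a*p) + 1) / 2)" by (simp add: Phi_def fun_eq_iff)
  moreover have "((\<lambda>p. (erf (a*p) + 1) / 2) has_real_derivative Phi a (Suc 0) p) (at p)"
    by (auto intro!: derivative_eq_intros simp: Phi_def hh_0 algebra_simps)
  ultimately show ?thesis using 0 by simp
next
  case (Suc m)
  have "Phi a k = (\<lambda>p. a / sqrt pi * a^m * hh m (a*p))" by (simp add: Phi_def fun_eq_iff Suc)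
  moreover have "((\<lambda>p. a / sqrt pi * a^m * hh m (a*p)) has_real_derivative a / sqrt pi * a^m * (hh (Suc m) (a*p) * a)) (at p)"
    by (rule DERIV_cmult, rule hh_chain, rule DERIV_cmult_Id)
  moreover have "a / sqrt pi * a^m * (hh (Suc m) (a*p) * a) = Phi a (Suc k) p"
    by (simp add: Phi_def Suc mult_ac)
  ultimately show ?thesis by simp
qed

lemma Vf_deriv: "(Vf j has_real_derivative Vf (Suc j) p) (at p)"
  unfolding Vf_def[abs_def] by (auto intro!: derivative_eq_intros)

lemma psi_LL0: "psi e = LL (Phi (a_par e)) Vf 0"
  by (simp add: fun_eq_iff LL_def Phi_def Vf_def psi_def phi_def)

lemma deriv_psi: "(deriv ^^ r) (psi e) = LL (Phi (a_par e)) Vf r"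
  using LL_higher[where U = "Phi (a_par e)" and V = Vf, OF Phi_deriv Vf_deriv] psi_LL0 by simp

lemma LL_cont: "isCont (LL (Phi a) Vf r) x"
  by (rule DERIV_isCont, rule LL_deriv[where U = "Phi a" and V = Vf, OF Phi_deriv Vf_deriv])

lemma exp_quarter: "exp (1/4 :: real) \<le> 3"
  using exp_le exp_le_cancel_iff[of "1/4::real" 1] by linarith

lemma term_bound:
  assumes eps: "0 < e" "e \<le> exp (-2)" and r: "ln (1/e) / 2 \<le> real r" and k: "k \<le> r"
  shows "\<bar>Phi (a_par e) k p\<bar> * exp (- p) \<le> 3 * exp (2 * real r) * (3 * real r)^k * exp (- \<bar>p\<bar>)"
proof (cases k)
  case 0
  have php: "0 < phi e p" using erf_gt[of "a_par e * p"] by (simp add: phi_def)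
  have "\<bar>Phi (a_par e) k p\<bar> * exp (- p) = psi e p"
    using php 0 by (simp add: Phi_def psi_def phi_def)
  also have "\<dots> \<le> exp (- \<bar>p\<bar>)" by (rule psi_le[OF eps])
  also have "\<dots> \<le> 3 * exp (2 * real r) * (3 * real r)^k * exp (- \<bar>p\<bar>)"
  proof -
    have "1 \<le> exp (2 * real r)" by simp
    then have "1 \<le> 3 * exp (2 * real r)" by linarith
    then show ?thesis using 0 by simp
  qed
  finally show ?thesis .
next
  case (Suc m)
  define a where "a = a_par e"
  define \<rho> where "\<rho> = sqrt (real r)"
  have L: "2 \<le> ln (1/e)" by (rule L_ge2[OF eps])
  have a2: "2 \<le> a" "a^2 = 4 * ln (1/e)" "0 < a" using a_facts[OF eps] by (auto simp: a_def)
  have r1: "1 \<le> real r" using L r by simp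
  have \<rho>1: "1 \<le> \<rho>" using r1 by (simp add: \<rho>_def)
  have \<rho>2: "\<rho>^2 = real r" by (simp add: \<rho>_def)
  have a_le: "a \<le> 3 * \<rho>"
  proof (rule power2_le_imp_le)
    show "a^2 \<le> (3 * \<rho>)^2" using a2 r \<rho>2 by (simp add: power_mult_distrib)
    show "0 \<le> 3 * \<rho>" using \<rho>1 by simp
  qed
  have hb: "\<bar>hh m (a*p)\<bar> \<le> fact m * exp (2 * \<rho>^2 - (a*p)^2 / 2) / \<rho>^m"
    using hh_bound[of \<rho> m "a*p"] \<rho>1 by simp
  have Phi_eq: "\<bar>Phi a k p\<bar> = a / sqrt pi * a^m * \<bar>hh m (a*p)\<bar>"
    using a2 by (simp add: Phi_def Suc abs_mult)
  have "a / sqrt pi \<le> a" using a2 sqrt_pi_ge1 by (simp add: divide_le_eq mult_le_cancel_left1)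
  then have "\<bar>Phi a k p\<bar> \<le> a * a^m * \<bar>hh m (a*p)\<bar>"
    unfolding Phi_eq using a2 by (intro mult_right_mono) auto
  also have "\<dots> = a^(Suc m) * \<bar>hh m (a*p)\<bar>" by simp
  also have "\<dots> \<le> a^(Suc m) * (fact m * exp (2 * \<rho>^2 - (a*p)^2 / 2) / \<rho>^m)"
    by (rule mult_left_mono[OF hb]) (use a2 in simp)
  finally have P1: "\<bar>Phi a k p\<bar> \<le> (a^(Suc m) * fact m / \<rho>^m) * exp (2 * real r - (a*p)^2 / 2)"
    using \<rho>2 by (simp add: field_simps)
  have coef: "a^(Suc m) * fact m / \<rho>^m \<le> (3 * real r)^k"
  proof -
    have mr: "m \<le> r" using k Suc by simp
    have f0: "(fact m :: real) \<le> real r ^ m"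
    proof -
      have "(fact m :: real) \<le> real (m^m)" by (rule fact_le_power)
      also have "\<dots> = real m ^ m" by simp
      also have "\<dots> \<le> real r ^ m" using mr by (intro power_mono) auto
      finally show ?thesis .
    qed
    have rr: "real r ^ m = \<rho>^m * \<rho>^m"
    proof -
      have "real r = \<rho> * \<rho>" using \<rho>2 by (simp add: power2_eq_square)
      then show ?thesis by (simp add: power_mult_distrib)
    qed
    have f1: "(fact m :: real) \<le> \<rho>^m * \<rho>^m" using f0 rr by simp
    have A: "a^(Suc m) \<le> (3*\<rho>)^(Suc m)" using a_le a2 by (intro power_mono) auto
    have "a^(Suc m) * fact m \<le> (3*\<rho>)^(Suc m) * (\<rho>^m * \<rho>^m)"
      by (rule mult_mono[OF A f1]) (use \<rho>1 in auto)
    then have "a^(Suc m) * fact m \<le> ((3*\<rho>)^(Suc m) * \<rho>^m) * \<rho>^m"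
      by (simp only: mult.assoc)
    then have "a^(Suc m) * fact m / \<rho>^m \<le> (3*\<rho>)^(Suc m) * \<rho>^m"
      using \<rho>1 by (subst pos_divide_le_eq) auto
    also have "\<dots> \<le> (3*\<rho>)^(Suc m) * \<rho>^(Suc m)"
      using \<rho>1 by (intro mult_left_mono power_increasing) auto
    also have "\<dots> = (3*\<rho>*\<rho>)^(Suc m)" by (simp only: power_mult_distrib)
    also have "3*\<rho>*\<rho> = 3 * real r" using \<rho>2 by (simp add: power2_eq_square)
    finally show ?thesis using Suc by simp
  qed
  have expb: "exp (2 * real r - (a*p)^2 / 2) * exp (- p) \<le> 3 * exp (2 * real r) * exp (- \<bar>p\<bar>)"
  proof -
    have h8: "8 * p^2 \<le> (a*p)^2" using a2 L by (simp add: power_mult_distrib mult_right_mono)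
    have sq: "0 \<le> (2 * \<bar>p\<bar> - 1/2)^2" by simp
    have e: "(2 * \<bar>p\<bar> - 1/2)^2 = 4 * p^2 - 2 * \<bar>p\<bar> + 1/4"
      by (simp add: power2_eq_square algebra_simps)
    have "- ((a*p)^2) / 2 - p \<le> 1/4 - \<bar>p\<bar>"
      using h8 sq e abs_ge_minus_self[of p] by linarith
    then have "exp (2 * real r - (a*p)^2 / 2) * exp (- p) \<le> exp (2 * real r) * exp (1/4) * exp (- \<bar>p\<bar>)"
      by (simp flip: exp_add)
    also have "\<dots> \<le> exp (2 * real r) * 3 * exp (- \<bar>p\<bar>)"
      using exp_quarter by (intro mult_right_mono mult_left_mono) auto
    finally show ?thesis by simp
  qed
  have "\<bar>Phi a k p\<bar> * exp (- p) \<le> (a^(Suc m) * fact m / \<rho>^m) * (exp (2 * real r - (a*p)^2 / 2) * exp (- p))"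
  proof -
    have "\<bar>Phi a k p\<bar> * exp (- p) \<le> ((a^(Suc m) * fact m / \<rho>^m) * exp (2 * real r - (a*p)^2 / 2)) * exp (- p)"
      by (rule mult_right_mono[OF P1]) simp
    then show ?thesis by (simp only: mult.assoc)
  qed
  also have "\<dots> \<le> (3 * real r)^k * (3 * exp (2 * real r) * exp (- \<bar>p\<bar>))"
    by (rule mult_mono[OF coef expb]) auto
  finally show ?thesis unfolding a_def by (simp add: algebra_simps)
qed



lemma LL_bound:
  assumes eps: "0 < e" "e \<le> exp (-2)" and r: "ln (1/e) / 2 \<le> real r"
  shows "\<bar>LL (Phi (a_par e)) Vf r p\<bar> \<le> 3 * exp (2 * real r) * (1 + 3 * real r)^r * exp (- \<bar>p\<bar>)"
proof -
  define E where "E = 3 * exp (2 * real r) * exp (- \<bar>p\<bar>)"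
  have "\<bar>LL (Phi (a_par e)) Vf r p\<bar> \<le> (\<Sum>k\<le>r. \<bar>real (r choose k) * Phi (a_par e) k p * Vf (r - k) p\<bar>)"
    unfolding LL_def by (rule sum_abs)
  also have "\<dots> = (\<Sum>k\<le>r. real (r choose k) * (\<bar>Phi (a_par e) k p\<bar> * exp (- p)))"
  proof (rule sum.cong[OF refl])
    fix k assume "k \<in> {..r}"
    show "\<bar>real (r choose k) * Phi (a_par e) k p * Vf (r - k) p\<bar> = real (r choose k) * (\<bar>Phi (a_par e) k p\<bar> * exp (- p))"
      by (simp add: abs_mult Vf_def power_abs)
  qed
  also have "\<dots> \<le> (\<Sum>k\<le>r. real (r choose k) * ((3 * real r)^k * E))"
  proof (rule sum_mono)
    fix k assume k: "k \<in> {..r}"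
    have "\<bar>Phi (a_par e) k p\<bar> * exp (- p) \<le> 3 * exp (2 * real r) * (3 * real r)^k * exp (- \<bar>p\<bar>)"
      by (rule term_bound[OF eps r]) (use k in simp)
    also have "\<dots> = (3 * real r)^k * E" by (simp add: E_def mult_ac)
    finally show "real (r choose k) * (\<bar>Phi (a_par e) k p\<bar> * exp (- p)) \<le> real (r choose k) * ((3 * real r)^k * E)"
      by (rule mult_left_mono) simp
  qed
  also have "\<dots> = E * (\<Sum>k\<le>r. of_nat (r choose k) * (3 * real r)^k * 1^(r-k))"
    unfolding sum_distrib_left by (rule sum.cong[OF refl]) (simp add: mult_ac)
  also have "(\<Sum>k\<le>r. of_nat (r choose k) * (3 * real r)^k * 1^(r-k)) = (3 * real r + 1)^r"
    by (rule binomial_ring[symmetric])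
  finally show ?thesis by (simp add: E_def mult_ac add.commute)
qed

lemma K_le:
  assumes "1 \<le> real r"
  shows "3 * exp (2 * real r) * (1 + 3 * real r)^r \<le> (108 * real r)^r"
proof -
  have r1: "1 \<le> r" using assms by simp
  have "(3::real) = 3^1" by simp
  also have "\<dots> \<le> 3^r" using r1 by (intro power_increasing) auto
  finally have a: "(3::real) \<le> 3^r" .
  have "exp (2 * real r) = exp 2 ^ r" using exp_of_nat_mult[of r 2] by (simp add: mult.commute)
  also have "\<dots> \<le> 9 ^ r"
  proof (rule power_mono)
    have "exp (2::real) = exp 1 * exp 1" by (simp flip: exp_add)
    also have "\<dots> \<le> 3 * 3" by (rule mult_mono[OF exp_le exp_le]) auto
    finally show "exp (2::real) \<le> 9" by simp
  qed simp
  finally have b: "exp (2 * real r) \<le> 9 ^ r" .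
  have c: "(1 + 3 * real r)^r \<le> (4 * real r)^r" using assms by (intro power_mono) auto
  have ab: "3 * exp (2 * real r) \<le> 3^r * 9^r" by (rule mult_mono[OF a b]) auto
  have "3 * exp (2 * real r) * (1 + 3 * real r)^r \<le> (3^r * 9^r) * (4 * real r)^r"
    by (rule mult_mono[OF ab c]) auto
  also have "\<dots> = (3 * 9 * (4 * real r))^r" by (simp only: power_mult_distrib)
  also have "(3 * 9 * (4 * real r)) = 108 * real r" by simp
  finally show ?thesis .
qed

definition f1 :: "real \<Rightarrow> real" where "f1 x = indicator {0..} x * exp (- 2 * x)"

lemma f1_meas: "f1 \<in> borel_measurable lborel"
  unfolding f1_def by measurable

lemma f1_int: "has_bochner_integral lborel f1 (1/2)"
proof -
  have "(\<integral>\<^sup>+x. ennreal (exp (- 2 * x)) * indicator {0..} x \<partial>lborel) = ennreal (0 - (- exp (- 2 * 0) / 2))"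
  proof (rule nn_integral_FTC_atLeast)
    show "((\<lambda>x::real. - exp (- 2 * x) / 2) \<longlongrightarrow> 0) at_top" by real_asymp
    show "(\<lambda>x::real. exp (- 2 * x)) \<in> borel_measurable borel"
      by (intro borel_measurable_continuous_onI continuous_intros)
    fix x :: real
    show "0 \<le> exp (- 2 * x)" by simp
    show "((\<lambda>x::real. - exp (- 2 * x) / 2) has_real_derivative exp (- 2 * x)) (at x)"
      by (auto intro!: derivative_eq_intros)
  qed
  also have "(\<integral>\<^sup>+x. ennreal (exp (- 2 * x)) * indicator {0..} x \<partial>lborel) = (\<integral>\<^sup>+x. ennreal (f1 x) \<partial>lborel)"
    by (intro nn_integral_cong) (simp add: f1_def indicator_def)
  finally have "(\<integral>\<^sup>+x. ennreal (f1 x) \<partial>lborel) = ennreal (1/2)" by simp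
  moreover have "AE x in lborel. 0 \<le> f1 x" by (simp add: f1_def)
  ultimately show ?thesis
    by (intro has_bochner_integral_nn_integral f1_meas) auto
qed

lemma f1_refl: "has_bochner_integral lborel (\<lambda>x. f1 (- x)) (1/2)"
proof -
  have "has_bochner_integral lborel (\<lambda>x. f1 (0 + (-1) * x)) ((1/2) /\<^sub>R \<bar>-1\<bar>)"
    using lborel_has_bochner_integral_real_affine_iff[of "-1" f1 "1/2" 0] f1_int by simp
  then show ?thesis by simp
qed

lemma exp_abs_le: "exp (- 2 * \<bar>x\<bar>) \<le> f1 x + f1 (- x)"
  by (cases "0 \<le> x") (simp_all add: f1_def indicator_def)

lemma L2_bound:
  fixes F :: "real \<Rightarrow> real"
  assumes cont: "\<And>x. isCont F x" and K: "0 \<le> K" and bd: "\<And>x. \<bar>F x\<bar> \<le> K * exp (- \<bar>x\<bar>)"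
  shows "integrable lborel (\<lambda>x. (F x)^2)" "L2_norm_R F \<le> K"
proof -
  define g where "g x = K^2 * (f1 x + f1 (- x))" for x
  have gint: "has_bochner_integral lborel g (K^2 * (1/2 + 1/2))" unfolding g_def
    by (intro has_bochner_integral_mult_right has_bochner_integral_add f1_int f1_refl)
  have g_int: "integrable lborel g" using gint by (auto simp: has_bochner_integral_iff)
  have g_val: "integral\<^sup>L lborel g = K^2" using gint by (auto simp: has_bochner_integral_iff)
  have pt: "(F x)^2 \<le> g x" for x
  proof -
    have "(F x)^2 = \<bar>F x\<bar>^2" by simp
    also have "\<dots> \<le> (K * exp (- \<bar>x\<bar>))^2" using bd[of x] by (intro power_mono) auto
    also have "\<dots> = K^2 * exp (- 2 * \<bar>x\<bar>)"
      by (simp add: power_mult_distrib power2_eq_square flip: exp_add)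
    also have "\<dots> \<le> g x" unfolding g_def by (intro mult_left_mono exp_abs_le) auto
    finally show ?thesis .
  qed
  have meas: "(\<lambda>x. (F x)^2) \<in> borel_measurable lborel"
  proof -
    have "continuous_on UNIV (\<lambda>x. (F x)^2)"
      by (intro continuous_at_imp_continuous_on ballI continuous_intros cont)
    then show ?thesis by (simp add: borel_measurable_continuous_onI)
  qed
  show int: "integrable lborel (\<lambda>x. (F x)^2)"
  proof (rule Bochner_Integration.integrable_bound[OF g_int meas])
    show "AE x in lborel. norm ((F x)^2) \<le> norm (g x)"
      using pt by (auto intro: order_trans[OF _ abs_ge_self])
  qed
  have "integral\<^sup>L lborel (\<lambda>x. (F x)^2) \<le> integral\<^sup>L lborel g"
    by (rule integral_mono[OF int g_int pt])
  then have "integral\<^sup>L lborel (\<lambda>x. (F x)^2) \<le> K^2" using g_val by simp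
  then have "sqrt (integral\<^sup>L lborel (\<lambda>x. (F x)^2)) \<le> sqrt (K^2)" by (rule real_sqrt_le_mono)
  then show "L2_norm_R F \<le> K" using K by (simp add: L2_norm_R_def)
qed

theorem theorem4p1:
  shows "(\<forall>\<epsilon>::real. 0 < \<epsilon> \<and> \<epsilon> \<le> exp (-2) \<longrightarrow>
            (\<forall>p::real. 0 < psi \<epsilon> p \<and> psi \<epsilon> p \<le> exp (- \<bar>p\<bar>)) \<and>
            (\<forall>p::real. p \<ge> 1/2 \<longrightarrow> \<bar>psi \<epsilon> p - exp (- p)\<bar> \<le> \<epsilon>))
         \<and> (\<exists>C::real. C > 0 \<and>
            (\<forall>\<epsilon>::real. \<forall>r::nat. 0 < \<epsilon> \<and> \<epsilon> \<le> exp (-2) \<and>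
               ln (1/\<epsilon>) / 2 \<le> real r \<and> real r \<le> ln (1/\<epsilon>) \<longrightarrow>
               integrable lborel (\<lambda>x. ((deriv ^^ r) (psi \<epsilon>) x)\<^sup>2) \<and>
               L2_norm_R ((deriv ^^ r) (psi \<epsilon>)) powr (1 / real r) \<le> C * real r))"
proof (intro conjI)
  show "\<forall>\<epsilon>::real. 0 < \<epsilon> \<and> \<epsilon> \<le> exp (-2) \<longrightarrow>
            (\<forall>p::real. 0 < psi \<epsilon> p \<and> psi \<epsilon> p \<le> exp (- \<bar>p\<bar>)) \<and>
            (\<forall>p::real. p \<ge> 1/2 \<longrightarrow> \<bar>psi \<epsilon> p - exp (- p)\<bar> \<le> \<epsilon>)"
    using psi_pos psi_le psi_close by blast
  show "\<exists>C::real. C > 0 \<and>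
            (\<forall>\<epsilon>::real. \<forall>r::nat. 0 < \<epsilon> \<and> \<epsilon> \<le> exp (-2) \<and>
               ln (1/\<epsilon>) / 2 \<le> real r \<and> real r \<le> ln (1/\<epsilon>) \<longrightarrow>
               integrable lborel (\<lambda>x. ((deriv ^^ r) (psi \<epsilon>) x)\<^sup>2) \<and>
               L2_norm_R ((deriv ^^ r) (psi \<epsilon>)) powr (1 / real r) \<le> C * real r)"
  proof (intro exI[of _ 108] conjI allI impI)
    fix e :: real and r :: nat
    assume H: "0 < e \<and> e \<le> exp (-2) \<and> ln (1/e) / 2 \<le> real r \<and> real r \<le> ln (1/e)"
    then have eps: "0 < e" "e \<le> exp (-2)" and rr: "ln (1/e) / 2 \<le> real r" by auto
    have r1: "1 \<le> real r" using L_ge2[OF eps] rr by simp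
    define K where "K = 3 * exp (2 * real r) * (1 + 3 * real r)^r"
    have K0: "0 \<le> K" unfolding K_def by simp
    have D: "(deriv ^^ r) (psi e) = LL (Phi (a_par e)) Vf r" by (rule deriv_psi)
    have cont: "\<And>x. isCont ((deriv ^^ r) (psi e)) x" unfolding D by (rule LL_cont)
    have bd: "\<And>x. \<bar>(deriv ^^ r) (psi e) x\<bar> \<le> K * exp (- \<bar>x\<bar>)"
      unfolding D K_def by (rule LL_bound[OF eps rr])
    show "integrable lborel (\<lambda>x. ((deriv ^^ r) (psi e) x)\<^sup>2)"
      by (rule L2_bound(1)[OF cont K0 bd])
    have N: "L2_norm_R ((deriv ^^ r) (psi e)) \<le> K" by (rule L2_bound(2)[OF cont K0 bd])
    have N0: "0 \<le> L2_norm_R ((deriv ^^ r) (psi e))" by (simp add: L2_norm_R_def)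
    have "L2_norm_R ((deriv ^^ r) (psi e)) powr (1 / real r) \<le> K powr (1 / real r)"
      by (rule powr_mono2) (use N0 N in auto)
    also have "\<dots> \<le> ((108 * real r)^r) powr (1 / real r)"
      by (rule powr_mono2) (use K0 K_le[OF r1] in \<open>auto simp: K_def\<close>)
    also have "((108 * real r)^r) powr (1 / real r) = 108 * real r"
    proof -
      have pos: "0 < 108 * real r" using r1 by simp
      have "((108 * real r)^r) = (108 * real r) powr (real r)" by (rule powr_realpow[OF pos, symmetric])
      then show ?thesis using r1 by (simp add: powr_powr)
    qed
    finally show "L2_norm_R ((deriv ^^ r) (psi e)) powr (1 / real r) \<le> 108 * real r" .
  qed simp
qed


end
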